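(* If the coarse structure ${\downarrow}\mathcal E_X$ of a ballean $X$ has a linearly ordered base, then $X$ has bounded growth.
   Context: A ballean is a pair $(X,\mathcal E_X)$ where $X$ is a set and $\mathcal E_X$ is a family of subsets of $X\times X$ (entourages) such that: each $E\in\mathcal E_X$ contains the diagonal $\Delta_X$; for any $E,F\in\mathcal E_X$ there is $D\in\mathcal E_X$ with $E\circ F^{-1}\subset D$; and $\bigcup\mathcal E_X=X\times X$. For $E\subset X\times X$, $x\in X$, $A\subset X$: $E[x]=\{y:(x,y)\in E\}$, $E[A]=\bigcup_{a\in A}E[a]$. $B\subset X$ is bounded if $B\subset E[x]$ for some $E\in\mathcal E_X$, $x\in X$. The coarse structure generated by $\mathcal E_X$ is ${\downarrow}\mathcal E_X=\{E\subset X\times X:\Delta_X\subset E\subset F\text{ for some }F\in\mathcal E_X\}$; it has a linearly ordered base if some subfamily of it, linearly ordered by inclusion, has the property that every member of ${\downarrow}\mathcal E_X$ is contained in a member of the subfamily. $X$ has bounded growth if there is $G\subset X\times X$ with $G[B]$ bounded for all bounded $B\subset X$, and for each $E\in\mathcal E_X$ a bounded $B$ with $E[x]\subset G[x]$ for all $x\in X\setminus B$. *)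

theory Defs
  imports Main
begin

text \<open>Ball(ean) structures. Entourage E, point x, set A:
  E[x] = E `` {x},  E[A] = E `` A.  Composition E \<circ> F = E O F
  (pairs (x,z) with (x,y) in E and (y,z) in F).\<close>

definition ballean :: "'a set \<Rightarrow> ('a \<times> 'a) set set \<Rightarrow> bool" where
  "ballean X Ent \<longleftrightarrow>
     (\<forall>E\<in>Ent. E \<subseteq> X \<times> X) \<and>
     (\<forall>E\<in>Ent. Id_on X \<subseteq> E) \<and>
     (\<forall>E\<in>Ent. \<forall>F\<in>Ent. \<exists>D\<in>Ent. E O converse F \<subseteq> D) \<and>
     \<Union>Ent = X \<times> X"

definition bounded_in :: "'a set \<Rightarrow> ('a \<times> 'a) set set \<Rightarrow> 'a set \<Rightarrow> bool" where
  "bounded_in X Ent B \<longleftrightarrow> B \<subseteq> X \<and> (\<exists>E\<in>Ent. \<exists>x\<in>X. B \<subseteq> E `` {x})"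

definition coarse_structure :: "'a set \<Rightarrow> ('a \<times> 'a) set set \<Rightarrow> ('a \<times> 'a) set set" where
  "coarse_structure X Ent = {E. Id_on X \<subseteq> E \<and> (\<exists>F\<in>Ent. E \<subseteq> F)}"

definition has_linearly_ordered_base :: "('a \<times> 'a) set set \<Rightarrow> bool" where
  "has_linearly_ordered_base C \<longleftrightarrow>
     (\<exists>L. L \<subseteq> C \<and> (\<forall>A\<in>L. \<forall>B\<in>L. A \<subseteq> B \<or> B \<subseteq> A) \<and>
          (\<forall>E\<in>C. \<exists>L'\<in>L. E \<subseteq> L'))"

definition has_bounded_growth :: "'a set \<Rightarrow> ('a \<times> 'a) set set \<Rightarrow> bool" where
  "has_bounded_growth X Ent \<longleftrightarrow>
     (\<exists>G. G \<subseteq> X \<times> X \<and>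
          (\<forall>B. bounded_in X Ent B \<longrightarrow> bounded_in X Ent (G `` B)) \<and>
          (\<forall>E\<in>Ent. \<exists>B. bounded_in X Ent B \<and> (\<forall>x\<in>X - B. E `` {x} \<subseteq> G `` {x})))"

end

theory Submission
  imports Defs
begin

lemma ballD:
  assumes "ballean X Ent"
  shows "\<And>E. E\<in>Ent \<Longrightarrow> E \<subseteq> X \<times> X"
    and "\<And>E. E\<in>Ent \<Longrightarrow> Id_on X \<subseteq> E"
    and "\<And>E F. E\<in>Ent \<Longrightarrow> F\<in>Ent \<Longrightarrow> \<exists>D\<in>Ent. E O converse F \<subseteq> D"
    and "\<Union>Ent = X \<times> X"
  using assms unfolding ballean_def by auto

lemma ball_conv:
  assumes b: "ballean X Ent" and F: "F \<in> Ent"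
  shows "\<exists>D\<in>Ent. converse F \<subseteq> D"
proof -
  from ballD(3)[OF b F F] obtain D where D: "D \<in> Ent" "F O converse F \<subseteq> D"
    by blast
  have "converse F \<subseteq> D"
  proof
    fix p assume "p \<in> converse F"
    then obtain a c where p: "p = (c,a)" "(a,c) \<in> F" by auto
    with ballD(1)[OF b F] have "c \<in> X" by blast
    with ballD(2)[OF b F] have "(c,c) \<in> F" by blast
    with p D show "p \<in> D" by blast
  qed
  with D show ?thesis by blast
qed

lemma ball_comp:
  assumes b: "ballean X Ent" and E: "E \<in> Ent" and F: "F \<in> Ent"
  shows "\<exists>D\<in>Ent. E O F \<subseteq> D"
proof -
  from ball_conv[OF b F] obtain D1 where D1: "D1 \<in> Ent" "converse F \<subseteq> D1" by blast
  from ballD(3)[OF b E D1(1)] obtain D where D: "D \<in> Ent" "E O converse D1 \<subseteq> D"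
    by blast
  have "E O F \<subseteq> E O converse D1" using D1 by blast
  with D show ?thesis by blast
qed

theorem proposition3p4:
  fixes X :: "'a set" and Ent :: "('a \<times> 'a) set set"
  assumes "ballean X Ent"
    and "X \<noteq> {}"
    and "has_linearly_ordered_base (coarse_structure X Ent)"
  shows "has_bounded_growth X Ent"
proof -
  note b = assms(1)
  from assms(2) obtain x0 where x0: "x0 \<in> X" by blast
  from assms(3) obtain L where L: "L \<subseteq> coarse_structure X Ent"
    "\<forall>A\<in>L. \<forall>B\<in>L. A \<subseteq> B \<or> B \<subseteq> A"
    "\<forall>E\<in>coarse_structure X Ent. \<exists>L'\<in>L. E \<subseteq> L'"
    unfolding has_linearly_ordered_base_def by meson
  note sub = ballD(1)[OF b]
  have cov: "\<And>E. E \<in> Ent \<Longrightarrow> \<exists>La\<in>L. E \<subseteq> La"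
  proof -
    fix E assume "E \<in> Ent"
    then have "Id_on X \<subseteq> E" using ballD(2)[OF b] by blast
    with \<open>E \<in> Ent\<close> have "E \<union> Id_on X \<in> coarse_structure X Ent"
      unfolding coarse_structure_def by auto
    with L(3) show "\<exists>La\<in>L. E \<subseteq> La" by (meson Un_upper1 order_trans)
  qed
  have Lent: "\<And>La. La \<in> L \<Longrightarrow> \<exists>F\<in>Ent. La \<subseteq> F"
    using L(1) unfolding coarse_structure_def by auto
  define G where "G = {(x,y). x \<in> X \<and> y \<in> X \<and> (\<forall>Lm\<in>L. x \<in> Lm `` {x0} \<longrightarrow> (x,y) \<in> Lm)}"
  have GX: "G \<subseteq> X \<times> X" unfolding G_def by auto
  have bnd: "\<And>B. bounded_in X Ent B \<Longrightarrow> \<exists>La\<in>L. B \<subseteq> La `` {x0}"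
  proof -
    fix B assume "bounded_in X Ent B"
    then obtain E y where E: "E \<in> Ent" "y \<in> X" "B \<subseteq> E `` {y}"
      unfolding bounded_in_def by auto
    from ballD(4)[OF b] x0 E(2) have "(x0,y) \<in> \<Union>Ent" by blast
    then obtain F where F: "F \<in> Ent" "(x0,y) \<in> F" by blast
    from ball_comp[OF b F(1) E(1)] obtain D where D: "D \<in> Ent" "F O E \<subseteq> D" by blast
    from cov[OF D(1)] obtain La where La: "La \<in> L" "D \<subseteq> La" by blast
    have "B \<subseteq> La `` {x0}" using E(3) F(2) D(2) La(2) by auto
    with La show "\<exists>La\<in>L. B \<subseteq> La `` {x0}" by blast
  qed
  have part1: "\<forall>B. bounded_in X Ent B \<longrightarrow> bounded_in X Ent (G `` B)"
  proof (intro allI impI)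
    fix B assume "bounded_in X Ent B"
    from bnd[OF this] obtain La where La: "La \<in> L" "B \<subseteq> La `` {x0}" by blast
    from Lent[OF La(1)] obtain F where F: "F \<in> Ent" "La \<subseteq> F" by blast
    from ball_comp[OF b F(1) F(1)] obtain D where D: "D \<in> Ent" "F O F \<subseteq> D" by blast
    have "G `` B \<subseteq> D `` {x0}"
    proof
      fix z assume "z \<in> G `` B"
      then obtain x where x: "x \<in> B" "(x,z) \<in> G" by blast
      with La have "(x0,x) \<in> La" "(x,z) \<in> La" unfolding G_def by auto
      with F D show "z \<in> D `` {x0}" by blast
    qed
    with GX x0 D show "bounded_in X Ent (G `` B)" unfolding bounded_in_def by auto
  qed
  have part2: "\<forall>E\<in>Ent. \<exists>B. bounded_in X Ent B \<and> (\<forall>x\<in>X - B. E `` {x} \<subseteq> G `` {x})"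
  proof
    fix E assume E: "E \<in> Ent"
    from cov[OF E] obtain La where La: "La \<in> L" "E \<subseteq> La" by blast
    from Lent[OF La(1)] obtain F where F: "F \<in> Ent" "La \<subseteq> F" by blast
    define B where "B = La `` {x0} \<inter> X"
    have "bounded_in X Ent B" unfolding bounded_in_def B_def using F x0 by auto
    moreover have "\<forall>x\<in>X - B. E `` {x} \<subseteq> G `` {x}"
    proof (intro ballI subsetI)
      fix x y assume x: "x \<in> X - B" and y: "y \<in> E `` {x}"
      have yX: "y \<in> X" using y sub[OF E] by blast
      have "\<forall>Lm\<in>L. x \<in> Lm `` {x0} \<longrightarrow> (x,y) \<in> Lm"
      proof (intro ballI impI)
        fix Lm assume Lm: "Lm \<in> L" "x \<in> Lm `` {x0}"
        have "\<not> Lm \<subseteq> La" using Lm x unfolding B_def by auto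
        with L(2) Lm La have "La \<subseteq> Lm" by blast
        with y La show "(x,y) \<in> Lm" by blast
      qed
      with x yX show "y \<in> G `` {x}" unfolding G_def by auto
    qed
    ultimately show "\<exists>B. bounded_in X Ent B \<and> (\<forall>x\<in>X - B. E `` {x} \<subseteq> G `` {x})" by blast
  qed
  show ?thesis unfolding has_bounded_growth_def using GX part1 part2 by (intro exI[of _ G] conjI)
qed

end
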